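(* The irreducible $\lambda$-quiddities over the ring $(\mathbb{Z}/2\mathbb{Z})\times(\mathbb{Z}/2\mathbb{Z})$ are exactly, up to cyclic permutation, the following tuples (entries written as pairs of residues mod 2): - $((1,1),(1,1),(1,1))$; - $((0,0),(0,0),(0,0),(0,0))$, $((0,0),(0,1),(0,0),(0,1))$, $((0,0),(1,0),(0,0),(1,0))$, $((1,0),(0,1),(1,0),(0,1))$; - $((1,0),(1,0),(1,0),(1,0),(1,0),(1,0))$, $((0,1),(0,1),(0,1),(0,1),(0,1),(0,1))$.
   Context: All rings are commutative with unit. For $a_1,\ldots,a_n\in A$, $M_n(a_1,\ldots,a_n)=\begin{pmatrix}a_n&-1\\1&0\end{pmatrix}\cdots\begin{pmatrix}a_1&-1\\1&0\end{pmatrix}$. An $n$-tuple $(a_1,\ldots,a_n)\in A^n$ is a $\lambda$-quiddity over $A$ if $M_n(a_1,\ldots,a_n)=\pm\mathrm{Id}$. For $(a_1,\ldots,a_n)\in A^n$, $(b_1,\ldots,b_m)\in A^m$, define $(a_1,\ldots,a_n)\oplus(b_1,\ldots,b_m)=(a_1+b_m,a_2,\ldots,a_{n-1},a_n+b_1,b_2,\ldots,b_{m-1})$. Write $(a_1,\ldots,a_n)\sim(b_1,\ldots,b_n)$ if $(b_1,\ldots,b_n)$ is obtained from $(a_1,\ldots,a_n)$ or from $(a_n,\ldots,a_1)$ by a cyclic permutation. A $\lambda$-quiddity $(c_1,\ldots,c_n)$ with $n\ge3$ is reducible if there exist a $\lambda$-quiddity $(b_1,\ldots,b_l)$ and a tuple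 $(a_1,\ldots,a_m)$ with $l,m\ge3$ and $(c_1,\ldots,c_n)\sim(a_1,\ldots,a_m)\oplus(b_1,\ldots,b_l)$; it is irreducible otherwise (by convention $(0,0)$ is reducible). *)

theory Defs
  imports Main "HOL-Library.Product_Plus" "HOL-Library.Numeral_Type"
begin

instantiation prod :: (times, times) times
begin
definition times_prod_def: "x * y = (fst x * fst y, snd x * snd y)"
instance ..
end

instantiation prod :: (one, one) one
begin
definition one_prod_def: "1 = (1, 1)"
instance ..
end

instance prod :: (comm_ring_1, comm_ring_1) comm_ring_1
  by standard (auto simp: times_prod_def one_prod_def zero_prod_def plus_prod_def
      algebra_simps prod_eq_iff)

section \<open>2x2 matrices, written as (a, b, c, d) for ((a, b), (c, d))\<close>

type_synonym 'a mat2 = "'a \<times> 'a \<times> 'a \<times> 'a"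

fun mat2_mult :: "'a::comm_ring_1 mat2 \<Rightarrow> 'a mat2 \<Rightarrow> 'a mat2" where
  "mat2_mult (a, b, c, d) (e, f, g, h) = (a*e + b*g, a*f + b*h, c*e + d*g, c*f + d*h)"

definition mat2_id :: "'a::comm_ring_1 mat2" where
  "mat2_id = (1, 0, 0, 1)"

definition mat2_neg_id :: "'a::comm_ring_1 mat2" where
  "mat2_neg_id = (-1, 0, 0, -1)"

definition elem_mat :: "'a::comm_ring_1 \<Rightarrow> 'a mat2" where
  "elem_mat a = (a, -1, 1, 0)"

definition Mn :: "'a::comm_ring_1 list \<Rightarrow> 'a mat2" where
  "Mn xs = foldl (\<lambda>m a. mat2_mult (elem_mat a) m) mat2_id xs"

definition lambda_quiddity :: "'a::comm_ring_1 list \<Rightarrow> bool" where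
  "lambda_quiddity xs \<longleftrightarrow> Mn xs = mat2_id \<or> Mn xs = mat2_neg_id"

text \<open>(a_1..a_n) \<oplus> (b_1..b_m) = (a_1+b_m, a_2..a_{n-1}, a_n+b_1, b_2..b_{m-1}); used for n, m \<ge> 2\<close>
definition qsum :: "'a::comm_ring_1 list \<Rightarrow> 'a list \<Rightarrow> 'a list" where
  "qsum as bs =
     [hd as + last bs] @ take (length as - 2) (tl as) @ [last as + hd bs]
     @ take (length bs - 2) (tl bs)"

definition dihedral_equiv :: "'a list \<Rightarrow> 'a list \<Rightarrow> bool" where
  "dihedral_equiv cs ds \<longleftrightarrow> (\<exists>k. ds = rotate k cs \<or> ds = rotate k (rev cs))"

definition reducible :: "'a::comm_ring_1 list \<Rightarrow> bool" where
  "reducible cs \<longleftrightarrow>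
     (\<exists>as bs. lambda_quiddity bs \<and> length bs \<ge> 3 \<and> length as \<ge> 3
        \<and> dihedral_equiv cs (qsum as bs))"

text \<open>Irreducible: a lambda-quiddity of length n \<ge> 3 that is not reducible
 (length 1 has no quiddities, length 2 only (0,0), which is reducible by convention).\<close>
definition irreducible_quiddity :: "'a::comm_ring_1 list \<Rightarrow> bool" where
  "irreducible_quiddity cs \<longleftrightarrow> lambda_quiddity cs \<and> length cs \<ge> 3 \<and> \<not> reducible cs"

end

theory Submission imports Defs begin
lemma ex2: "(x::2) = 0 \<or> x = 1"
proof (induct x)
  case (of_int z) then have "z < 2" by simp
  with of_int have "z = 0 \<or> z = 1" by arith
  then show ?case by auto
qed
lemma ex22: "(p::2\<times>2) = (0,0) \<or> p = (0,1) \<or> p = (1,0) \<or> p = (1,1)"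
  using ex2[of "fst p"] ex2[of "snd p"] by (cases p) auto
lemma two2[simp]: "(1::2) + 1 = 0" "-(1::2) = 1" by simp_all
lemmas cs = Mn_def elem_mat_def mat2_id_def mat2_neg_id_def times_prod_def one_prod_def zero_prod_def lambda_quiddity_def

lemma len3: "length xs = 3 \<Longrightarrow> \<exists>a b c. xs = [a,b,c]"
  by (auto simp: length_Suc_conv numeral_eq_Suc)
lemma len4: "length xs = 4 \<Longrightarrow> \<exists>a b c d. xs = [a,b,c,d]"
  by (auto simp: length_Suc_conv numeral_eq_Suc)
lemma len5: "length xs = 5 \<Longrightarrow> \<exists>a b c d e. xs = [a,b,c,d,e]"
  by (auto simp: length_Suc_conv numeral_eq_Suc)

lemma q3: "lambda_quiddity [a,b,c::2\<times>2] \<Longrightarrow> a = (1,1) \<and> b = (1,1) \<and> c = (1,1)"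
  using ex22[of a] ex22[of b] ex22[of c] by (elim disjE) (simp_all add: cs)

lemma q4: "lambda_quiddity [x,a,a,y::2\<times>2] \<Longrightarrow> a = (1,0) \<or> a = (0,1) \<Longrightarrow> False"
  using ex22[of x] ex22[of y] by (elim disjE) (simp_all add: cs)
lemma q5: "lambda_quiddity [x,a,a,a,y::2\<times>2] \<Longrightarrow> a = (1,0) \<or> a = (0,1) \<Longrightarrow> False"
  using ex22[of x] ex22[of y] by (elim disjE) (simp_all add: cs)

definition S :: "(2\<times>2) list list" where
 "S = [[(1,1),(1,1),(1,1)],
       [(0,0),(0,0),(0,0),(0,0)],
       [(0,0),(0,1),(0,0),(0,1)], [(0,1),(0,0),(0,1),(0,0)],
       [(0,0),(1,0),(0,0),(1,0)], [(1,0),(0,0),(1,0),(0,0)],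
       [(1,0),(0,1),(1,0),(0,1)], [(0,1),(1,0),(0,1),(1,0)],
       [(1,0),(1,0),(1,0),(1,0),(1,0),(1,0)],
       [(0,1),(0,1),(0,1),(0,1),(0,1),(0,1)]]"

lemma q4all: "lambda_quiddity [a,b,c,d::2\<times>2] \<Longrightarrow> (1,1) \<notin> set [a,b,c,d] \<Longrightarrow> [a,b,c,d] \<in> set S"
  using ex22[of a] ex22[of b] ex22[of c] ex22[of d] by (elim disjE) (simp_all add: cs S_def)


lemma rot_rep: "rotate k (replicate n a) = replicate n a"
  proof (induct k)
  case (Suc k) then show ?case by (cases n) (simp_all add: replicate_append_same)
qed simp
lemma rot_ab: "rotate k [a,b,a,b] = (if even k then [a,b,a,b] else [b,a,b,a])"
  by (induct k) (auto simp: rotate1_def)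

lemma S_rot:
  "(\<exists>k. \<exists>t \<in> {[(1,1),(1,1),(1,1)],
                 [(0,0),(0,0),(0,0),(0,0)],
                 [(0,0),(0,1),(0,0),(0,1)],
                 [(0,0),(1,0),(0,0),(1,0)],
                 [(1,0),(0,1),(1,0),(0,1)],
                 [(1,0),(1,0),(1,0),(1,0),(1,0),(1,0)],
                 [(0,1),(0,1),(0,1),(0,1),(0,1),(0,1)]}.
       cs = rotate k t) \<longleftrightarrow> cs \<in> set S" (is "(\<exists>k. \<exists>t\<in>?T. _) \<longleftrightarrow> _")
proof
  have r3: "[(1,1),(1,1),(1,1)] = replicate 3 ((1,1)::2\<times>2)"
    and r4: "[(0,0),(0,0),(0,0),(0,0)] = replicate 4 ((0,0)::2\<times>2)"
    and r6: "[(1,0),(1,0),(1,0),(1,0),(1,0),(1,0)] = replicate 6 ((1,0)::2\<times>2)"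
    and r6': "[(0,1),(0,1),(0,1),(0,1),(0,1),(0,1)] = replicate 6 ((0,1)::2\<times>2)"
    by (simp_all add: numeral_eq_Suc)
  assume "\<exists>k. \<exists>t\<in>?T. cs = rotate k t"
  then obtain k t where t: "t \<in> ?T" and c: "cs = rotate k t" by blast
  have "t = [(1,1),(1,1),(1,1)] \<or> t = [(0,0),(0,0),(0,0),(0,0)] \<or> t = [(0,0),(0,1),(0,0),(0,1)]
    \<or> t = [(0,0),(1,0),(0,0),(1,0)] \<or> t = [(1,0),(0,1),(1,0),(0,1)]
    \<or> t = [(1,0),(1,0),(1,0),(1,0),(1,0),(1,0)] \<or> t = [(0,1),(0,1),(0,1),(0,1),(0,1),(0,1)]"
    using t by (simp only: insert_iff empty_iff simp_thms)
  then have "cs = [(1,1),(1,1),(1,1)] \<or> cs = [(0,0),(0,0),(0,0),(0,0)]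
    \<or> cs = [(0,0),(0,1),(0,0),(0,1)] \<or> cs = [(0,1),(0,0),(0,1),(0,0)]
    \<or> cs = [(0,0),(1,0),(0,0),(1,0)] \<or> cs = [(1,0),(0,0),(1,0),(0,0)]
    \<or> cs = [(1,0),(0,1),(1,0),(0,1)] \<or> cs = [(0,1),(1,0),(0,1),(1,0)]
    \<or> cs = [(1,0),(1,0),(1,0),(1,0),(1,0),(1,0)] \<or> cs = [(0,1),(0,1),(0,1),(0,1),(0,1),(0,1)]"
    apply (elim disjE)
    using c apply (simp_all only: r3 r4 r6 r6' rot_rep rot_ab if_split simp_thms)
    apply blast+
    done
  then show "cs \<in> set S" unfolding S_def by (simp only: set_simps insert_iff empty_iff simp_thms)
next
  assume "cs \<in> set S"
  then show "\<exists>k. \<exists>t\<in>?T. cs = rotate k t"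
    unfolding S_def
    apply (simp only: set_simps insert_iff empty_iff)
    apply (elim disjE)
    apply ((rule exI[of _ 0]; simp; fail) | (rule exI[of _ 1]; simp add: rotate1_def; fail))+
    done
qed

lemma rot1: "i < length xs \<Longrightarrow> rotate (Suc i) xs = (drop (Suc i) xs @ take i xs) @ [xs!i]"
proof (cases "Suc i < length xs")
  case True
  assume "i < length xs"
  then show ?thesis using True by (simp add: rotate_drop_take take_Suc_conv_app_nth)
next
  case False
  assume i: "i < length xs"
  then have "Suc i = length xs" using False by simp
  have r: "rotate (Suc i) xs = xs" using rotate_conv_mod[of "Suc i" xs] \<open>Suc i = length xs\<close> by simp
  have "xs = take (Suc i) xs" using \<open>Suc i = length xs\<close> by simp
  also have "... = take i xs @ [xs!i]" by (simp add: take_Suc_conv_app_nth i)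
  finally show ?thesis using r \<open>Suc i = length xs\<close> by simp
qed

lemma rot2: "Suc i < length xs \<Longrightarrow> rotate (Suc (Suc i)) xs = (drop (Suc (Suc i)) xs @ take i xs) @ [xs!i, xs!Suc i]"
proof -
  assume a: "Suc i < length xs"
  have "rotate (Suc (Suc i)) xs = (drop (Suc (Suc i)) xs @ take (Suc i) xs) @ [xs!Suc i]"
    using rot1[OF a] .
  also have "take (Suc i) xs = take i xs @ [xs!i]" using a by (simp add: take_Suc_conv_app_nth)
  finally show ?thesis by simp
qed

lemma split_ends: "length d \<ge> 2 \<Longrightarrow> d = [hd d] @ take (length d - 2) (tl d) @ [last d]"
proof (cases d)
  case (Cons x ys)
  assume "length d \<ge> 2"
  then have "ys \<noteq> []" using Cons by auto
  then have "ys = butlast ys @ [last ys]" by simp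
  moreover have "take (length ys - 1) ys = butlast ys" by (simp add: butlast_conv_take)
  ultimately show ?thesis using Cons \<open>ys \<noteq> []\<close> by simp
qed simp

lemma G:
  fixes d bs :: "'a::comm_ring_1 list"
  assumes q: "lambda_quiddity bs" and lb: "length bs \<ge> 3" and ld: "length d \<ge> 3"
    and e: "d @ take (length bs - 2) (tl bs) = rotate k cs"
  shows "reducible cs"
proof -
  define as where "as = [hd d - last bs] @ take (length d - 2) (tl d) @ [last d - hd bs]"
  have la: "length as = length d" using ld by (simp add: as_def)
  have "qsum as bs = ([hd d] @ take (length d - 2) (tl d) @ [last d]) @ take (length bs - 2) (tl bs)"
    using ld la by (simp add: qsum_def as_def)
  also have "... = d @ take (length bs - 2) (tl bs)" using split_ends[of d] ld by simp
  finally have "qsum as bs = rotate k cs" using e by simp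
  then have "dihedral_equiv cs (qsum as bs)" unfolding dihedral_equiv_def by blast
  then show ?thesis unfolding reducible_def
    apply (rule_tac x=as in exI, rule_tac x=bs in exI) using q lb ld la by simp
qed

lemma not_red:
  fixes cs :: "(2\<times>2) list"
  assumes "reducible cs"
  shows "length cs \<ge> 4 \<and> (length cs = 4 \<longrightarrow> (1,1) \<in> set cs)
     \<and> (\<forall>a. (a = (1,0) \<or> a = (0,1)) \<and> length cs = 6 \<and> set cs = {a} \<longrightarrow> False)"
proof -
  from assms obtain as bs where q: "lambda_quiddity bs" and lb: "length bs \<ge> 3" and la: "length as \<ge> 3"
    and de: "dihedral_equiv cs (qsum as bs)" unfolding reducible_def by blast
  from de have sc: "set (qsum as bs) = set cs" and lc: "length (qsum as bs) = length cs"
    unfolding dihedral_equiv_def by auto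
  have lq: "length (qsum as bs) = length as + length bs - 2" using la lb by (simp add: qsum_def)
  have mid: "set (take (length bs - 2) (tl bs)) \<subseteq> set cs" using sc[symmetric] by (auto simp: qsum_def)
  have c3: "(1,1) \<in> set cs" if l3: "length bs = 3"
  proof -
    obtain x y z where "bs = [x,y,z]" using len3[OF l3] by blast
    with q q3 have "bs = [(1,1),(1,1),(1,1)]" by blast
    then show ?thesis using mid by simp
  qed
  have "length cs \<ge> 4" using lc lq la lb by simp
  moreover have "length cs = 4 \<longrightarrow> (1,1) \<in> set cs" using lc lq la lb c3 by auto
  moreover have "False" if a: "a = (1,0) \<or> a = (0,1)" and l6: "length cs = 6" and sa: "set cs = {a}" for a
  proof -
    have "length bs = 3 \<or> length bs = 4 \<or> length bs = 5" using lc lq la lb l6 by auto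
    moreover have "length bs \<noteq> 3" using c3 sa a by auto
    moreover have "length bs \<noteq> 4"
    proof
      assume "length bs = 4"
      then obtain x y z w where b: "bs = [x,y,z,w]" using len4 by blast
      then have "y = a" "z = a" using mid sa by auto
      then show False using q b q4 a by blast
    qed
    moreover have "length bs \<noteq> 5"
    proof
      assume "length bs = 5"
      then obtain x y z w v where b: "bs = [x,y,z,w,v]" using len5 by blast
      then have "y = a" "z = a" "w = a" using mid sa by auto
      then show False using q b q5 a by blast
    qed
    ultimately show False by blast
  qed
  ultimately show ?thesis by blast
qed

lemma rep6: "replicate 6 a = [a,a,a,a,a,a]" by (simp add: numeral_eq_Suc)

lemma Mn_rep6: "a = (1,0) \<or> a = (0,1) \<Longrightarrow> Mn (replicate 6 (a::2\<times>2)) = mat2_id"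
  unfolding rep6 by (elim disjE) (simp_all add: cs)

lemma Mn_rep_mod:
  assumes a: "a = (1,0) \<or> a = (0,1)"
  shows "Mn (replicate n (a::2\<times>2)) = Mn (replicate (n mod 6) a)"
proof (induct n rule: less_induct)
  case (less n)
  show ?case
  proof (cases "n < 6")
    case True then show ?thesis by simp
  next
    case False
    then obtain m where n: "n = 6 + m" by (metis add_diff_inverse)
    have h: "foldl (\<lambda>m a. mat2_mult (elem_mat a) m) mat2_id (replicate 6 a) = mat2_id"
      using Mn_rep6[OF a] unfolding Mn_def .
    have "Mn (replicate n a) = Mn (replicate m a)"
      unfolding n Mn_def by (simp only: replicate_add foldl_append h)
    also have "... = Mn (replicate (m mod 6) a)" using less(1)[of m] n by linarith
    also have "m mod 6 = n mod 6" using n by simp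
    finally show ?thesis .
  qed
qed
lemma rep_small: "a = (1,0) \<or> a = (0,1) \<Longrightarrow> r = 1 \<or> r = 2 \<or> r = 3 \<or> r = 4 \<or> r = (5::nat)
  \<Longrightarrow> \<not> lambda_quiddity (replicate r (a::2\<times>2))"
  by (elim disjE; simp add: cs numeral_eq_Suc)

lemma rep_quid:
  assumes a: "a = (1,0) \<or> a = (0,1)" and q: "lambda_quiddity (replicate n (a::2\<times>2))"
  shows "n mod 6 = 0"
proof (rule ccontr)
  assume "n mod 6 \<noteq> 0"
  moreover have "n mod 6 < 6" by simp
  ultimately have r: "n mod 6 = 1 \<or> n mod 6 = 2 \<or> n mod 6 = 3 \<or> n mod 6 = 4 \<or> n mod 6 = 5" by linarith
  have q': "lambda_quiddity (replicate (n mod 6) a)"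
    using q unfolding lambda_quiddity_def Mn_rep_mod[OF a, of n] .
  show False using rep_small[OF a r] q' by blast
qed

definition B :: "(2\<times>2) list list" where
 "B = [[(0,0),(0,0),(0,0),(0,0)],
       [(0,0),(0,1),(0,0),(0,1)], [(0,1),(0,0),(0,1),(0,0)],
       [(0,0),(1,0),(0,0),(1,0)], [(1,0),(0,0),(1,0),(0,0)],
       [(1,0),(0,1),(1,0),(0,1)], [(0,1),(1,0),(0,1),(1,0)]]"

lemma B_quid: "bs \<in> set B \<Longrightarrow> lambda_quiddity bs \<and> length bs = 4"
  unfolding B_def by (simp only: set_simps insert_iff empty_iff) (elim disjE; simp add: cs)

lemma pair_red:
  fixes p q :: "2\<times>2"
  assumes "p \<noteq> (1,1)" "q \<noteq> (1,1)" "\<not> ((p = (1,0) \<and> q = (1,0)) \<or> (p = (0,1) \<and> q = (0,1)))"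
  shows "\<exists>bs\<in>set B. take 2 (tl bs) = [p,q]"
  using ex22[of p] ex22[of q] assms unfolding B_def by (elim disjE) simp_all

theorem main:
  fixes cs :: "(2\<times>2) list"
  shows "irreducible_quiddity cs \<longleftrightarrow> cs \<in> set S"
proof
  assume "cs \<in> set S"
  moreover have N: "False" if r: "reducible cs" and c: "cs \<in> set S"
  proof -
    from not_red[OF r] have N1: "4 \<le> length cs" and N2: "length cs = 4 \<longrightarrow> (1,1) \<in> set cs"
      and N3: "\<not>(length cs = 6 \<and> set cs = {(1,0)})" and N4: "\<not>(length cs = 6 \<and> set cs = {(0,1)})"
      by blast+
    from c N1 N2 N3 N4 show False unfolding S_def
      by (simp only: set_simps insert_iff empty_iff) (elim disjE; simp)
  qed
  moreover have "lambda_quiddity cs \<and> length cs \<ge> 3" if c: "cs \<in> set S"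
    using c unfolding S_def
    by (simp only: set_simps insert_iff empty_iff) (elim disjE; simp add: cs)
  ultimately show "irreducible_quiddity cs" unfolding irreducible_quiddity_def by blast
next
  assume "irreducible_quiddity cs"
  then have q: "lambda_quiddity cs" and l3: "length cs \<ge> 3" and nr: "\<not> reducible cs"
    unfolding irreducible_quiddity_def by auto
  define n where "n = length cs"
  have no11: "(1,1) \<notin> set cs" if l4: "n \<ge> 4"
  proof
    assume "(1,1) \<in> set cs"
    then obtain i where i: "i < length cs" "cs!i = (1,1)" by (auto simp: in_set_conv_nth)
    have e: "(drop (Suc i) cs @ take i cs) @ take (length [(1,1),(1,1),(1::2,1::2)] - 2) (tl [(1,1),(1,1),(1,1)])
        = rotate (Suc i) cs" using rot1[OF i(1)] i(2) by simp
    have ld: "length (drop (Suc i) cs @ take i cs) \<ge> 3" using i l4 n_def by auto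
    have lq: "lambda_quiddity [(1,1),(1,1),(1::2,1::2)]" by (simp add: cs)
    have "reducible cs" by (rule G[OF lq _ ld e]) simp
    with nr show False by blast
  qed
  consider "n = 3" | "n = 4" | "n \<ge> 5" using l3 n_def by linarith
  then show "cs \<in> set S"
  proof cases
    case 1
    then have "length cs = 3" using n_def by simp
    then obtain a b c where e: "cs = [a,b,c]" using len3 by blast
    then have "a = (1,1) \<and> b = (1,1) \<and> c = (1,1)" using q q3 by blast
    then show ?thesis using e by (simp add: S_def)
  next
    case 2
    then have "length cs = 4" using n_def by simp
    then obtain a b c d where e: "cs = [a,b,c,d]" using len4 by blast
    with q q4all no11 2 show ?thesis by simp
  next
    case 3
    have good: "(cs!i = (1,0) \<and> cs!Suc i = (1,0)) \<or> (cs!i = (0,1) \<and> cs!Suc i = (0,1))"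
      if si: "Suc i < n" for i
    proof (rule ccontr)
      assume ng: "\<not> ?thesis"
      have n11: "(1,1) \<notin> set cs" using no11 3 by simp
      have "cs!i \<in> set cs" "cs!Suc i \<in> set cs" using si n_def by simp_all
      then have "cs!i \<noteq> (1,1)" "cs!Suc i \<noteq> (1,1)" using n11 by auto
      then obtain bs where b: "bs \<in> set B" and bm: "take 2 (tl bs) = [cs!i, cs!Suc i]"
        using pair_red ng by blast
      have bq: "lambda_quiddity bs" "length bs = 4" using B_quid[OF b] by auto
      have e: "(drop (Suc (Suc i)) cs @ take i cs) @ take (length bs - 2) (tl bs) = rotate (Suc (Suc i)) cs"
        using rot2[of i cs] si n_def bm bq by simp
      have ld: "length (drop (Suc (Suc i)) cs @ take i cs) \<ge> 3" using si 3 n_def by auto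
      have "reducible cs" by (rule G[OF bq(1) _ ld e]) (simp add: bq)
      with nr show False by blast
    qed
    define a where "a = cs!0"
    have a: "a = (1,0) \<or> a = (0,1)" using good[of 0] 3 a_def by auto
    have all: "cs!i = a" if "i < n" for i
      using that
    proof (induct i)
      case 0 then show ?case by (simp add: a_def)
    next
      case (Suc i) then show ?case using good[of i] by auto
    qed
    have csr: "cs = replicate n a"
      by (rule nth_equalityI) (simp_all add: n_def all[unfolded n_def])
    have m6: "n mod 6 = 0" using rep_quid[OF a] q csr by simp
    show ?thesis
    proof (cases "n = 6")
      case True
      then show ?thesis using csr a by (simp add: S_def rep6)
    next
      case False
      with m6 3 have n12: "n \<ge> 12" by presburger
      have e: "replicate (n - 4) a @ take (length (replicate 6 a) - 2) (tl (replicate 6 a)) = rotate 0 cs"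
        using csr n12 by (simp add: replicate_add[symmetric])
      have lq: "lambda_quiddity (replicate 6 a)" using Mn_rep6[OF a] by (simp add: lambda_quiddity_def)
      have ld: "length (replicate (n - 4) a) \<ge> 3" using n12 by simp
      have "reducible cs" by (rule G[OF lq _ ld e]) simp
      with nr show ?thesis by blast
    qed
  qed
qed

theorem theorem2p6:
  fixes cs :: "(2 \<times> 2) list"
  shows "irreducible_quiddity cs \<longleftrightarrow>
    (\<exists>k. \<exists>t \<in> {[(1,1),(1,1),(1,1)],
                 [(0,0),(0,0),(0,0),(0,0)],
                 [(0,0),(0,1),(0,0),(0,1)],
                 [(0,0),(1,0),(0,0),(1,0)],
                 [(1,0),(0,1),(1,0),(0,1)],
                 [(1,0),(1,0),(1,0),(1,0),(1,0),(1,0)],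
                 [(0,1),(0,1),(0,1),(0,1),(0,1),(0,1)]}.
       cs = rotate k t)"
  unfolding S_rot by (rule main)

end
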